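(* Let $n\ge 1$. For $i,j\in\{1,\dots,n\}$ let $L_i>0$, $\mu_i>0$, $\theta_i\ge 0$ and $\gamma_{ij}\ge 0$ be real numbers with $\gamma_{ii}=0$ and $\gamma_{ij}=\gamma_{ji}$ for all $i,j$. Let $A$ be the $n\times n$ real matrix with entries $$A_{ii}=-\Big(\frac{\mu_i}{L_i}+\theta_i+\sum_{j=1}^n\frac{\gamma_{ij}}{L_i}\Big),\qquad A_{ij}=\frac{\gamma_{ij}}{L_j}\quad (i\neq j).$$ Then every eigenvalue of $A$ has negative real part.
   Context: This matrix is the coefficient matrix of the linear inventory model $y'(t)=Ay(t)+b$ for $n$ warehouses in one echelon, where $L_i$ is the maximum inventory level of warehouse $i$, $\mu_i$ its maximum supply rate, $\theta_i$ its deterioration percentage per unit time, and $\gamma_{ij}$ the maximum lateral transshipment rate from warehouse $i$ to warehouse $j$. *)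

theory Defs
  imports "Jordan_Normal_Form.Char_Poly"
begin

definition inv_matrix :: "nat \<Rightarrow> (nat \<Rightarrow> real) \<Rightarrow> (nat \<Rightarrow> real) \<Rightarrow> (nat \<Rightarrow> real)
    \<Rightarrow> (nat \<Rightarrow> nat \<Rightarrow> real) \<Rightarrow> real mat" where
  "inv_matrix n L \<mu> \<theta> \<gamma> = mat n n (\<lambda>(i,j).
     if i = j then - (\<mu> i / L i + \<theta> i + (\<Sum>k<n. \<gamma> i k / L i))
     else \<gamma> i j / L j)"

end

theory Submission
  imports Defs
begin

theorem lemma1:
  fixes n :: nat and z :: complex and L \<mu> \<theta> :: "nat \<Rightarrow> real" and \<gamma> :: "nat \<Rightarrow> nat \<Rightarrow> real"
  assumes "n \<ge> 1"
    and "\<And>i. i < n \<Longrightarrow> L i > 0"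
    and "\<And>i. i < n \<Longrightarrow> \<mu> i > 0"
    and "\<And>i. i < n \<Longrightarrow> \<theta> i \<ge> 0"
    and "\<And>i j. i < n \<Longrightarrow> j < n \<Longrightarrow> \<gamma> i j \<ge> 0"
    and "\<And>i. i < n \<Longrightarrow> \<gamma> i i = 0"
    and "\<And>i j. i < n \<Longrightarrow> j < n \<Longrightarrow> \<gamma> i j = \<gamma> j i"
    and "eigenvalue (map_mat complex_of_real (inv_matrix n L \<mu> \<theta> \<gamma>)) z"
  shows "Re z < 0"
proof (rule ccontr)
  assume nz: "\<not> Re z < 0"
  define A where "A = map_mat complex_of_real (inv_matrix n L \<mu> \<theta> \<gamma>)"
  have dA: "dim_row A = n" "dim_col A = n" by (auto simp: A_def inv_matrix_def)
  obtain v where v: "v \<in> carrier_vec n" "v \<noteq> 0\<^sub>v n" "A *\<^sub>v v = z \<cdot>\<^sub>v v"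
    using assms(8) unfolding eigenvalue_def eigenvector_def A_def[symmetric] dA by blast
  define u where "u j = v $ j / complex_of_real (L j)" for j
  have vu: "v $ j = of_real (L j) * u j" if "j < n" for j
    using assms(2)[OF that] by (simp add: u_def)
  obtain j0 where j0: "j0 < n" "v $ j0 \<noteq> 0"
    using v(1,2) by (metis carrier_vecD eq_vecI index_zero_vec(1,2))
  have u0: "u j0 \<noteq> 0" using j0 assms(2)[OF j0(1)] by (simp add: u_def)
  define m where "m = Max ((\<lambda>j. cmod (u j)) ` {..<n})"
  have "m \<in> (\<lambda>j. cmod (u j)) ` {..<n}" unfolding m_def using j0 by (intro Max_in) auto
  then obtain i where i: "i < n" "cmod (u i) = m" by auto
  have imax: "cmod (u j) \<le> cmod (u i)" if "j < n" for j
  proof -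
    have "cmod (u j) \<le> m" unfolding m_def using that by (intro Max_ge) auto
    then show ?thesis using i by simp
  qed
  have upos: "cmod (u i) > 0" using imax[OF j0(1)] u0 by (smt (verit) norm_ge_zero norm_eq_zero)
  define S where "S = (\<Sum>k<n. \<gamma> i k)"
  define c where "c = \<mu> i + \<theta> i * L i + S"
  have Li: "L i > 0" using assms(2)[OF i(1)] .
  have sumS: "(\<Sum>k<n. \<gamma> i k / L i) = S / L i" by (simp add: S_def sum_divide_distrib)
  have entry: "A $$ (i, j) * v $ j = of_real (\<gamma> i j) * u j - (if j = i then of_real c * u i else 0)"
    if j: "j < n" for j
  proof (cases "j = i")
    case True
    have "A $$ (i, j) = - of_real (\<mu> i / L i + \<theta> i + S / L i)"
      using True i j by (simp add: A_def inv_matrix_def sumS)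
    then have "A $$ (i, j) * of_real (L i) = - of_real c"
      using Li by (simp add: c_def field_simps flip: of_real_mult of_real_add of_real_minus)
    then have "A $$ (i, j) * v $ j = - of_real c * u i"
      using True vu[OF j] by (metis mult.assoc mult.commute)
    then show ?thesis using True assms(6)[OF i(1)] by simp
  next
    case False
    have "A $$ (i, j) = of_real (\<gamma> i j / L j)"
      using False i j by (simp add: A_def inv_matrix_def)
    then show ?thesis using False vu[OF j] assms(2)[OF j] by simp
  qed
  have "(A *\<^sub>v v) $ i = (\<Sum>j<n. A $$ (i, j) * v $ j)"
    using i v(1) dA by (simp add: scalar_prod_def lessThan_atLeast0)
  also have "\<dots> = (\<Sum>j<n. of_real (\<gamma> i j) * u j - (if j = i then of_real c * u i else 0))"
    using entry by simp
  also have "\<dots> = (\<Sum>j<n. of_real (\<gamma> i j) * u j) - of_real c * u i"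
    using i by (simp add: sum_subtractf)
  finally have eq1: "(A *\<^sub>v v) $ i = (\<Sum>j<n. of_real (\<gamma> i j) * u j) - of_real c * u i" .
  have "(A *\<^sub>v v) $ i = z * (of_real (L i) * u i)" using v i vu[OF i(1)] by simp
  with eq1 have eq2: "(z * of_real (L i) + of_real c) * u i = (\<Sum>j<n. of_real (\<gamma> i j) * u j)"
    by (simp add: algebra_simps)
  have "cmod ((z * of_real (L i) + of_real c) * u i) \<le> (\<Sum>j<n. cmod (of_real (\<gamma> i j) * u j))"
    unfolding eq2 by (rule norm_sum)
  also have "\<dots> \<le> (\<Sum>j<n. \<gamma> i j * cmod (u i))"
  proof (rule sum_mono)
    fix j assume "j \<in> {..<n}"
    then have j: "j < n" by simp
    have "cmod (of_real (\<gamma> i j) * u j) = \<gamma> i j * cmod (u j)"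
      using assms(5)[OF i(1) j] by (simp add: norm_mult)
    also have "\<dots> \<le> \<gamma> i j * cmod (u i)"
      using imax[OF j] assms(5)[OF i(1) j] by (simp add: mult_left_mono)
    finally show "cmod (of_real (\<gamma> i j) * u j) \<le> \<gamma> i j * cmod (u i)" .
  qed
  also have "\<dots> = S * cmod (u i)" by (simp add: S_def sum_distrib_right)
  finally have "cmod (z * of_real (L i) + of_real c) * cmod (u i) \<le> S * cmod (u i)"
    by (simp add: norm_mult)
  then have le: "cmod (z * of_real (L i) + of_real c) \<le> S" using upos by simp
  have "Re (z * of_real (L i) + of_real c) = Re z * L i + c" by simp
  also have "\<dots> > S"
    using nz Li assms(3)[OF i(1)] assms(4)[OF i(1)] unfolding c_def
    by (smt (verit) mult_nonneg_nonneg)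
  finally have "S < cmod (z * of_real (L i) + of_real c)"
    using complex_Re_le_cmod by (smt (verit))
  with le show False by simp
qed

end
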